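(* Let $X_{\Omega_-}$ and $X_{\Omega_+}$ be convex toric domains in $\mathbb{R}^4$. Suppose that for every pair of relatively prime positive integers $a,b>0$ we have $\|(a,b)\|^*_{\Omega_-}\le\|(a,b)\|^*_{\Omega_+}$. Then $\Omega_-\subset\Omega_+$.
   Context: Let $\mu:\mathbb{C}^2\to\mathbb{R}^2_{\ge0}$, $\mu(z_1,z_2)=(\pi|z_1|^2,\pi|z_2|^2)$. Let $\Omega\subset\mathbb{R}^2_{\ge0}$ be compact with $0\in\operatorname{int}(\Omega)$, whose boundary consists of the segment from $(0,0)$ to $(a(\Omega),0)$, the segment from $(0,0)$ to $(0,b(\Omega))$ (with $a(\Omega),b(\Omega)>0$), and a continuous curve $\partial_+\Omega$ from $(a(\Omega),0)$ to $(0,b(\Omega))$ meeting the axes only at its endpoints. $X_\Omega=\mu^{-1}(\Omega)$ is a convex toric domain if $\{\mu\in\mathbb{R}^2:(|\mu_1|,|\mu_2|)\in\Omega\}$ is convex. For $(a,b)\in\mathbb{Z}^2_{\ge0}$, $\|(a,b)\|^*_\Omega=\max\{ax+by:(x,y)\in\Omega\}$ (in the paper this quantity is the $\Omega$-action $\mathcal{A}_\Omega(e_{a,b})$). *)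

theory Defs
  imports "HOL-Analysis.Analysis"
begin

definition quadrant :: "(real \<times> real) set" where
  "quadrant = {p. fst p \<ge> 0 \<and> snd p \<ge> 0}"

definition toric_region :: "(real \<times> real) set \<Rightarrow> bool" where
  "toric_region \<Omega> \<longleftrightarrow>
     compact \<Omega> \<and> \<Omega> \<subseteq> quadrant \<and>
     (\<exists>e>0. ball (0,0) e \<inter> quadrant \<subseteq> \<Omega>) \<and>
     (\<exists>a b (\<gamma>::real \<Rightarrow> real \<times> real). a > 0 \<and> b > 0 \<and>
        continuous_on {0..1} \<gamma> \<and> \<gamma> 0 = (a, 0) \<and> \<gamma> 1 = (0, b) \<and>
        (\<forall>t\<in>{0<..<1}. fst (\<gamma> t) > 0 \<and> snd (\<gamma> t) > 0) \<and>
        frontier \<Omega> = closed_segment (0,0) (a,0) \<union> closed_segment (0,0) (0,b) \<union> \<gamma> ` {0..1})"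

text \<open>X_\<Omega> is a convex toric domain: the symmetrization of \<Omega> is convex.\<close>

definition convex_toric_domain :: "(real \<times> real) set \<Rightarrow> bool" where
  "convex_toric_domain \<Omega> \<longleftrightarrow>
     toric_region \<Omega> \<and> convex {\<mu> :: real \<times> real. (\<bar>fst \<mu>\<bar>, \<bar>snd \<mu>\<bar>) \<in> \<Omega>}"

definition omega_norm :: "(real \<times> real) set \<Rightarrow> nat \<Rightarrow> nat \<Rightarrow> real" where
  "omega_norm \<Omega> a b = (SUP p\<in>\<Omega>. real a * fst p + real b * snd p)"

end

theory Submission
  imports Defs
begin

lemma ctd_facts:
  assumes "convex_toric_domain \<Omega>"
  shows "compact \<Omega>" "\<Omega> \<subseteq> quadrant" "\<exists>e>0. ball (0,0) e \<inter> quadrant \<subseteq> \<Omega>"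
    "convex {\<mu> :: real \<times> real. (\<bar>fst \<mu>\<bar>, \<bar>snd \<mu>\<bar>) \<in> \<Omega>}"
proof -
  have t: "toric_region \<Omega>" and c: "convex {\<mu> :: real \<times> real. (\<bar>fst \<mu>\<bar>, \<bar>snd \<mu>\<bar>) \<in> \<Omega>}"
    using assms unfolding convex_toric_domain_def by blast+
  show "compact \<Omega>" using t[unfolded toric_region_def, THEN conjunct1] .
  show "\<Omega> \<subseteq> quadrant" using t[unfolded toric_region_def, THEN conjunct2, THEN conjunct1] .
  show "\<exists>e>0. ball (0,0) e \<inter> quadrant \<subseteq> \<Omega>"
    using t[unfolded toric_region_def, THEN conjunct2, THEN conjunct2, THEN conjunct1] .
  show "convex {\<mu> :: real \<times> real. (\<bar>fst \<mu>\<bar>, \<bar>snd \<mu>\<bar>) \<in> \<Omega>}" by (rule c)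
qed

lemma coprime_reduce:
  fixes a b :: nat and A :: "(real \<times> real) set" and p :: "real \<times> real"
  assumes "a > 0" "b > 0" "\<forall>q\<in>A. real a * fst q + real b * snd q \<le> K"
    "real a * fst p + real b * snd p > K"
  shows "\<exists>a' b' K'. a' > 0 \<and> b' > 0 \<and> coprime a' b' \<and>
     (\<forall>q\<in>A. real a' * fst q + real b' * snd q \<le> K') \<and>
     real a' * fst p + real b' * snd p > K'"
proof -
  define d where "d = gcd a b"
  have d0: "d > 0" using assms(1) by (simp add: d_def)
  define a' where "a' = a div d"
  define b' where "b' = b div d"
  have ea: "a = d * a'" by (simp add: a'_def d_def)
  have eb: "b = d * b'" by (simp add: b'_def d_def)
  have cop: "coprime a' b'" unfolding a'_def b'_def d_def
    using assms(1) by (intro div_gcd_coprime) auto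
  have pa: "a' > 0" using ea assms(1) by (cases a') auto
  have pb: "b' > 0" using eb assms(2) by (cases b') auto
  have rd: "real d > 0" using d0 by simp
  have 1: "\<forall>q\<in>A. real a' * fst q + real b' * snd q \<le> K / real d"
  proof
    fix q assume "q \<in> A"
    then have "real d * (real a' * fst q + real b' * snd q) \<le> K"
      using assms(3) ea eb by (auto simp: algebra_simps)
    then show "real a' * fst q + real b' * snd q \<le> K / real d"
      using rd by (simp add: field_simps)
  qed
  have "real d * (real a' * fst p + real b' * snd p) > K"
    using assms(4) ea eb by (auto simp: algebra_simps)
  then have 2: "real a' * fst p + real b' * snd p > K / real d"
    using rd by (simp add: field_simps)
  show ?thesis using pa pb cop 1 2 by blast
qed

lemma separate:
  fixes \<Omega> :: "(real \<times> real) set" and p :: "real \<times> real"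
  assumes ct: "convex_toric_domain \<Omega>" and pq: "p \<in> quadrant" and pn: "p \<notin> \<Omega>"
  shows "\<exists>a b :: nat. \<exists>K. a > 0 \<and> b > 0 \<and>
     (\<forall>q\<in>\<Omega>. real a * fst q + real b * snd q \<le> K) \<and>
     real a * fst p + real b * snd p > K"
proof -
  define S where "S = {\<mu> :: real \<times> real. (\<bar>fst \<mu>\<bar>, \<bar>snd \<mu>\<bar>) \<in> \<Omega>}"
  have cvx: "convex S" using ctd_facts(4)[OF ct] unfolding S_def .
  have comp: "compact \<Omega>" and sub: "\<Omega> \<subseteq> quadrant"
    using ctd_facts[OF ct] by simp_all
  have cl: "closed S"
  proof -
    have "continuous_on UNIV (\<lambda>\<mu>::real\<times>real. (\<bar>fst \<mu>\<bar>, \<bar>snd \<mu>\<bar>))"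
      by (intro continuous_on_Pair continuous_on_rabs continuous_on_fst continuous_on_snd continuous_on_id)
    moreover have "closed \<Omega>" using comp by (rule compact_imp_closed)
    ultimately have "closed ((\<lambda>\<mu>::real\<times>real. (\<bar>fst \<mu>\<bar>, \<bar>snd \<mu>\<bar>)) -` \<Omega>)"
      by (intro closed_vimage)
    moreover have "S = (\<lambda>\<mu>::real\<times>real. (\<bar>fst \<mu>\<bar>, \<bar>snd \<mu>\<bar>)) -` \<Omega>"
      unfolding S_def by (simp add: vimage_def)
    ultimately show ?thesis by simp
  qed
  have p0: "fst p \<ge> 0" "snd p \<ge> 0" using pq by (auto simp: quadrant_def)
  have "(\<bar>fst p\<bar>, \<bar>snd p\<bar>) = p" using p0 by (cases p) auto
  then have "p \<notin> S" using pn unfolding S_def by auto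
  then obtain c \<beta> where c1: "inner c p < \<beta>" and c2: "\<forall>x\<in>S. inner c x > \<beta>"
    using separating_hyperplane_closed_point[OF cvx cl] by blast
  define u where "u = \<bar>fst c\<bar>"
  define v where "v = \<bar>snd c\<bar>"
  have u0: "u \<ge> 0" and v0: "v \<ge> 0" by (auto simp: u_def v_def)
  have bndO: "\<forall>q\<in>\<Omega>. u * fst q + v * snd q < - \<beta>"
  proof
    fix q assume qO: "q \<in> \<Omega>"
    then have q0: "fst q \<ge> 0" "snd q \<ge> 0" using sub by (auto simp: quadrant_def)
    define r where "r = (if fst c \<ge> 0 then - fst q else fst q, if snd c \<ge> 0 then - snd q else snd q)"
    have "(\<bar>fst r\<bar>, \<bar>snd r\<bar>) = q"
      using q0 by (cases q) (auto simp: r_def)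
    then have "r \<in> S" using qO unfolding S_def by simp
    then have "inner c r > \<beta>" using c2 by blast
    moreover have "inner c r = - (u * fst q + v * snd q)"
      by (cases c) (auto simp: r_def u_def v_def inner_prod_def algebra_simps)
    ultimately show "u * fst q + v * snd q < - \<beta>" by simp
  qed
  have pv: "u * fst p + v * snd p > - \<beta>"
  proof -
    have "inner c p = fst c * fst p + snd c * snd p"
      by (cases c, cases p) (simp add: inner_prod_def)
    also have "\<dots> \<ge> - (u * fst p + v * snd p)"
    proof -
      have "- u \<le> fst c" "- v \<le> snd c" unfolding u_def v_def by simp_all
      then have "(- u) * fst p \<le> fst c * fst p" "(- v) * snd p \<le> snd c * snd p"
        using p0 mult_right_mono by blast+
      then have "fst c * fst p \<ge> - (u * fst p)" "snd c * snd p \<ge> - (v * snd p)"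
        by simp_all
      then show ?thesis by linarith
    qed
    finally show ?thesis using c1 by linarith
  qed
  define g where "g = u * fst p + v * snd p + \<beta>"
  have g0: "g > 0" using pv by (simp add: g_def)
  have "bounded \<Omega>" using comp compact_imp_bounded by blast
  then obtain B where B: "\<forall>x\<in>\<Omega>. norm x \<le> B" by (auto simp: bounded_iff)
  define M where "M = 2 * \<bar>B\<bar> + 1"
  have M: "\<forall>q\<in>\<Omega>. fst q + snd q \<le> M"
  proof
    fix q :: "real \<times> real" assume "q \<in> \<Omega>"
    then have "norm q \<le> B" using B by blast
    moreover have "fst q \<le> norm q" using norm_fst_le[of "fst q" "snd q"] by simp
    moreover have "snd q \<le> norm q" using norm_snd_le[of "snd q" "fst q"] by simp
    ultimately show "fst q + snd q \<le> M" unfolding M_def by linarith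
  qed
  obtain N :: nat where N: "real N \<ge> (M + 1) / g" using real_arch_simple by blast
  have NM: "real N * g \<ge> M + 1" using N g0 by (simp add: field_simps)
  define a where "a = nat \<lfloor>real N * u\<rfloor> + 1"
  define b where "b = nat \<lfloor>real N * v\<rfloor> + 1"
  have Nu: "real N * u \<ge> 0" "real N * v \<ge> 0" using u0 v0 by auto
  have ha: "real N * u \<le> real a" "real a \<le> real N * u + 1"
    using Nu unfolding a_def by (auto simp: of_nat_nat) linarith+
  have hb: "real N * v \<le> real b" "real b \<le> real N * v + 1"
    using Nu unfolding b_def by (auto simp: of_nat_nat) linarith+
  have 1: "\<forall>q\<in>\<Omega>. real a * fst q + real b * snd q \<le> real N * (- \<beta>) + M"
  proof
    fix q assume qO: "q \<in> \<Omega>"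
    then have q0: "fst q \<ge> 0" "snd q \<ge> 0" using sub by (auto simp: quadrant_def)
    have "real a * fst q \<le> (real N * u + 1) * fst q" using ha q0 mult_right_mono by blast
    moreover have "real b * snd q \<le> (real N * v + 1) * snd q" using hb q0 mult_right_mono by blast
    moreover have "real N * (u * fst q + v * snd q) \<le> real N * (- \<beta>)"
      using bndO qO by (intro mult_left_mono) auto
    moreover have "fst q + snd q \<le> M" using M qO by blast
    ultimately show "real a * fst q + real b * snd q \<le> real N * (- \<beta>) + M"
      by (simp add: algebra_simps)
  qed
  have "real a * fst p \<ge> real N * u * fst p" using ha p0 mult_right_mono by blast
  moreover have "real b * snd p \<ge> real N * v * snd p" using hb p0 mult_right_mono by blast
  moreover have "real N * (u * fst p + v * snd p) = real N * (- \<beta>) + real N * g"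
    by (simp add: g_def algebra_simps)
  moreover have "M > 0" by (simp add: M_def) 
  ultimately have 2: "real a * fst p + real b * snd p > real N * (- \<beta>) + M"
    using NM g0 by (simp add: algebra_simps)
  have "a > 0" "b > 0" by (simp_all add: a_def b_def)
  then show ?thesis using 1 2 by blast
qed

theorem lemma3p5:
  fixes \<Omega>m \<Omega>p :: "(real \<times> real) set"
  assumes "convex_toric_domain \<Omega>m" and "convex_toric_domain \<Omega>p"
    and "\<And>a b :: nat. a > 0 \<Longrightarrow> b > 0 \<Longrightarrow> coprime a b \<Longrightarrow>
           omega_norm \<Omega>m a b \<le> omega_norm \<Omega>p a b"
  shows "\<Omega>m \<subseteq> \<Omega>p"
proof
  fix p assume pm: "p \<in> \<Omega>m"
  show "p \<in> \<Omega>p"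
  proof (rule ccontr)
    assume pn: "p \<notin> \<Omega>p"
    have subm: "\<Omega>m \<subseteq> quadrant" and compm: "compact \<Omega>m"
      using ctd_facts[OF assms(1)] by simp_all
    have pq: "p \<in> quadrant" using pm subm by blast
    obtain a0 b0 K where "a0 > (0::nat)" "b0 > (0::nat)"
      "\<forall>q\<in>\<Omega>p. real a0 * fst q + real b0 * snd q \<le> K"
      "real a0 * fst p + real b0 * snd p > K"
      using separate[OF assms(2) pq pn] by blast
    then obtain a b K' where ab: "a > 0" "b > 0" "coprime a b"
      and K1: "\<forall>q\<in>\<Omega>p. real a * fst q + real b * snd q \<le> K'"
      and K2: "real a * fst p + real b * snd p > K'"
      using coprime_reduce by metis
    obtain e where "e > 0" "ball (0,0) e \<inter> quadrant \<subseteq> \<Omega>p"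
      using ctd_facts(3)[OF assms(2)] by blast
    then have "(0,0) \<in> \<Omega>p" by (auto simp: quadrant_def)
    then have ne: "\<Omega>p \<noteq> {}" by blast
    have up: "omega_norm \<Omega>p a b \<le> K'"
      unfolding omega_norm_def using ne K1 by (intro cSUP_least) auto
    have "bounded ((\<lambda>q. real a * fst q + real b * snd q) ` \<Omega>m)"
      using compm by (intro compact_imp_bounded compact_continuous_image continuous_intros)
    then have bdd: "bdd_above ((\<lambda>q. real a * fst q + real b * snd q) ` \<Omega>m)"
      by (rule bounded_imp_bdd_above)
    have lo: "omega_norm \<Omega>m a b \<ge> real a * fst p + real b * snd p"
      unfolding omega_norm_def using bdd pm by (intro cSUP_upper) auto
    show False using assms(3)[OF ab] up lo K2 by linarith
  qed
qed

end
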